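(* Suppose that $1/n\ll \eta\ll \zeta,1/r,1/k$. Suppose $F$ is an allocation such that for every $j\in[r]$ there exists $f\in F$ with $f^{-1}(j)\neq\emptyset$. Let $\mathcal{P}$ be a partition of a set $V$ into parts $V_1,\dots,V_r$, each of size $n$, and let $J$ be a $\mathcal{P}F$-partite $k$-complex on $V$ satisfying $\delta^F(J)\ge (n,\zeta n,\dots,\zeta n)$. Then for every $j\in[r]$ and every $v\in V_j$, $$|\tilde N_{\eta,1}(v,J_k)\cap V_j|\ge \delta^F_{k-1}(J)-\sqrt{\eta}\,n.$$
   Context: Hierarchy convention: "$a\ll b$" means that for every $b>0$ there is $a_0>0$ such that the statement holds for all $0<a\le a_0$; longer hierarchies are read analogously. A $k$-complex is a hypergraph $J$ in which every edge has at most $k$ vertices and every subset of an edge is an edge; $J_i$ is the set of edges of size exactly $i$. Allocations: an allocation function is a map $f:[k]\to[r]$, with index vector $\mathbf{i}(f)=(|f^{-1}(1)|,\dots,|f^{-1}(r)|)$. Given a multiset $I$ of $k$-vectors in $\mathbb{Z}^r$ (nonnegative integer vectors with coordinate sum $k$), an allocation $F$ is the multiset obtained by choosing, for each $\mathbf{i}\in I$ (with repetition), some $f$ with $\mathbf{i}(f)=\mathbf{i}$ and including all $k!$ functions $f\circ\sigma$, $\sigma\in\mathrm{Sym}_k$ (with repetition). $J$ on $V=V_1\cup\dots\cup V_r$ is $\mathcal{P}F$-partite if for every $j\in[k]$ and $e\in J_j$ there is $f\in F$ with $e=\{v_1,\dots,v_j\}$ and $v_i\in V_{f(i)}$ for all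 $i\in[j]$. For $f\in F$ and $0\le j\le k-1$, $\delta^f_j(J)$ is the largest $m$ such that for every edge $\{v_1,\dots,v_j\}\in J$ with $v_i\in V_{f(i)}$ there are at least $m$ vertices $v_{j+1}\in V_{f(j+1)}$ with $\{v_1,\dots,v_{j+1}\}\in J$; $\delta^F_j(J)=\min_{f\in F}\delta^f_j(J)$, $\delta^F(J)=(\delta^F_0(J),\dots,\delta^F_{k-1}(J))$, compared coordinatewise. Reachability: for a $k$-graph $H$ on $N$ vertices, two vertices $u,w$ are $(\beta,i)$-reachable in $H$ if there are at least $\beta N^{ik-1}$ sets $S$ of size $ik-1$ such that both $H[S\cup\{u\}]$ and $H[S\cup\{w\}]$ have perfect matchings. With respect to the partition $\mathcal{P}$, $\tilde N_{\beta,i}(v,H)$ denotes the set of vertices in the same part of $\mathcal{P}$ as $v$ that are $(\beta,i)$-reachable to $v$ in $H$. Here $H=J_k$ and $N=rn$. *)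

theory Defs
  imports Complex_Main "HOL-Library.Multiset" "HOL-Library.FuncSet"
    "HOL-Library.Extended_Real" "HOL-Combinatorics.Permutations"
begin

(* An allocation is the multiset obtained by choosing
   (with repetition) a multiset G of allocation functions (one per index vector
   of the multiset I) and including, for each g in G, all k! functions g o sigma,
   sigma in Sym_k (with repetition). *)

definition sym_orbit :: "nat \<Rightarrow> (nat \<Rightarrow> nat) \<Rightarrow> (nat \<Rightarrow> nat) multiset" where
  "sym_orbit k g = image_mset (\<lambda>\<sigma>. g \<circ> \<sigma>) (mset_set {\<sigma>. \<sigma> permutes {1..k}})"

definition is_allocation :: "nat \<Rightarrow> nat \<Rightarrow> (nat \<Rightarrow> nat) multiset \<Rightarrow> bool" where
  "is_allocation k r F \<longleftrightarrow>
     (\<exists>G :: (nat \<Rightarrow> nat) multiset. set_mset G \<subseteq> ({1..k} \<rightarrow>\<^sub>E {1..r}) \<and>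
        F = sum_mset (image_mset (sym_orbit k) G))"

definition is_k_complex :: "nat \<Rightarrow> nat set \<Rightarrow> nat set set \<Rightarrow> bool" where
  "is_k_complex k V J \<longleftrightarrow>
     {} \<in> J \<and>
     (\<forall>e\<in>J. e \<subseteq> V \<and> finite e \<and> card e \<le> k) \<and>
     (\<forall>e\<in>J. \<forall>e'. e' \<subseteq> e \<longrightarrow> e' \<in> J)"

definition layer :: "nat set set \<Rightarrow> nat \<Rightarrow> nat set set" where
  "layer J i = {e \<in> J. card e = i}"

definition is_partition :: "nat \<Rightarrow> nat \<Rightarrow> nat set \<Rightarrow> (nat \<Rightarrow> nat set) \<Rightarrow> bool" where
  "is_partition r n V Vp \<longleftrightarrow>
     (\<forall>j\<in>{1..r}. card (Vp j) = n) \<and>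
     (\<forall>i\<in>{1..r}. \<forall>j\<in>{1..r}. i \<noteq> j \<longrightarrow> Vp i \<inter> Vp j = {}) \<and>
     V = (\<Union>j\<in>{1..r}. Vp j)"

definition f_shaped :: "(nat \<Rightarrow> nat set) \<Rightarrow> (nat \<Rightarrow> nat) \<Rightarrow> nat \<Rightarrow> nat set \<Rightarrow> bool" where
  "f_shaped Vp f j e \<longleftrightarrow> (\<exists>v :: nat \<Rightarrow> nat. e = v ` {1..j} \<and> (\<forall>i\<in>{1..j}. v i \<in> Vp (f i)))"

definition is_PF_partite :: "nat \<Rightarrow> (nat \<Rightarrow> nat set) \<Rightarrow> (nat \<Rightarrow> nat) multiset \<Rightarrow> nat set set \<Rightarrow> bool" where
  "is_PF_partite k Vp F J \<longleftrightarrow>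
     (\<forall>j\<in>{1..k}. \<forall>e\<in>layer J j. \<exists>f\<in>#F. f_shaped Vp f j e)"

(* delta^f_j(J): the largest m (possibly infinite if there are no such edges)
   such that every edge {v_1..v_j} of J with v_i in V_{f(i)} has at least m
   extensions by a new vertex v_{j+1} in V_{f(j+1)} *)
definition delta_f :: "(nat \<Rightarrow> nat set) \<Rightarrow> nat set set \<Rightarrow> (nat \<Rightarrow> nat) \<Rightarrow> nat \<Rightarrow> ereal" where
  "delta_f Vp J f j =
     (INF e \<in> {e \<in> J. card e = j \<and> f_shaped Vp f j e}.
        ereal (real (card {u \<in> Vp (f (Suc j)). u \<notin> e \<and> insert u e \<in> J})))"

definition delta_F :: "(nat \<Rightarrow> nat set) \<Rightarrow> nat set set \<Rightarrow> (nat \<Rightarrow> nat) multiset \<Rightarrow> nat \<Rightarrow> ereal" where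
  "delta_F Vp J F j = (INF f \<in> set_mset F. delta_f Vp J f j)"

definition induced :: "nat set set \<Rightarrow> nat set \<Rightarrow> nat set set" where
  "induced H X = {e \<in> H. e \<subseteq> X}"

definition has_perfect_matching :: "nat set set \<Rightarrow> nat set \<Rightarrow> bool" where
  "has_perfect_matching H X \<longleftrightarrow> (\<exists>M \<subseteq> H. pairwise disjnt M \<and> \<Union>M = X)"

definition reachable :: "nat \<Rightarrow> nat set \<Rightarrow> nat set set \<Rightarrow> real \<Rightarrow> nat \<Rightarrow> nat \<Rightarrow> nat \<Rightarrow> bool" where
  "reachable k V H \<beta> i u w \<longleftrightarrow>
     real (card {S. S \<subseteq> V \<and> card S = i * k - 1 \<and>
                 has_perfect_matching (induced H (insert u S)) (insert u S) \<and>
                 has_perfect_matching (induced H (insert w S)) (insert w S)})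
       \<ge> \<beta> * real (card V) ^ (i * k - 1)"

definition reach_nbhd :: "nat \<Rightarrow> nat \<Rightarrow> nat set \<Rightarrow> (nat \<Rightarrow> nat set) \<Rightarrow> nat set set \<Rightarrow> real \<Rightarrow> nat \<Rightarrow> nat \<Rightarrow> nat set" where
  "reach_nbhd k r V Vp H \<beta> i v =
     {w. (\<exists>j\<in>{1..r}. v \<in> Vp j \<and> w \<in> Vp j) \<and> reachable k V H \<beta> i v w}"

end

theory Submission imports Defs begin

lemma orbit_closed:
  assumes "is_allocation k r F" "f \<in># F" "\<sigma> permutes {1..k}"
  shows "f \<circ> \<sigma> \<in># F"
proof -
  obtain G where F: "F = sum_mset (image_mset (sym_orbit k) G)"
    using assms(1) unfolding is_allocation_def by auto
  then obtain h where h: "h \<in># G" "f \<in># sym_orbit k h" using assms(2)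
    by (auto simp: in_Union_mset_iff)
  have fin: "finite {\<sigma>. \<sigma> permutes {1..k}}" by (rule finite_permutations) simp
  from h(2) obtain \<tau> where \<tau>: "\<tau> permutes {1..k}" "f = h \<circ> \<tau>"
    unfolding sym_orbit_def using fin by auto
  have "\<tau> \<circ> \<sigma> permutes {1..k}" using permutes_compose[OF assms(3) \<tau>(1)] .
  hence "f \<circ> \<sigma> \<in># sym_orbit k h" unfolding sym_orbit_def using fin \<tau>(2)
    by (auto simp: o_assoc intro!: image_eqI[where x="\<tau> \<circ> \<sigma>"])
  then show ?thesis using F h(1) by (auto simp: in_Union_mset_iff)
qed

lemma dF_le: "f \<in># F \<Longrightarrow> delta_F Vp J F j \<le> delta_f Vp J f j"
  unfolding delta_F_def by (rule INF_lower) simp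

lemma df_le: "e \<in> J \<Longrightarrow> card e = j \<Longrightarrow> f_shaped Vp f j e \<Longrightarrow>
  delta_f Vp J f j \<le> ereal (real (card {u \<in> Vp (f (Suc j)). u \<notin> e \<and> insert u e \<in> J}))"
  unfolding delta_f_def by (rule INF_lower) simp

lemma arith_final:
  fixes a m \<rho> \<eta> \<zeta> n r k :: real and q :: nat
  assumes main: "a * m \<le> \<rho> * a + n * (\<eta> * (r * n) ^ q)"
    and alow: "(\<zeta> * n / k) ^ q \<le> a" and apos: "a > 0" and \<eta>: "\<eta> > 0"
    and \<eta>le: "\<eta> \<le> ((\<zeta> / (r * k)) ^ q)\<^sup>2"
    and pos: "\<zeta> > 0" "r > 0" "k > 0" "n > 0"
  shows "m \<le> \<rho> + sqrt \<eta> * n"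
proof -
  define c where "c = (\<zeta> / (r * k)) ^ q"
  have cpos: "c > 0" unfolding c_def using pos by simp
  have rc: "(r * n) ^ q * c = (\<zeta> * n / k) ^ q"
    unfolding c_def power_mult_distrib[symmetric] using pos by (simp add: field_simps)
  have sc: "sqrt \<eta> \<le> c"
    using real_sqrt_le_mono[OF \<eta>le[folded c_def]] cpos by simp
  have "\<eta> = sqrt \<eta> * sqrt \<eta>" using \<eta> by simp
  also have "\<dots> \<le> sqrt \<eta> * c" using sc \<eta> by (intro mult_left_mono) simp_all
  finally have ec: "\<eta> \<le> sqrt \<eta> * c" .
  have rnn: "(r * n) ^ q \<ge> 0" using pos by simp
  have "n * (\<eta> * (r * n) ^ q) \<le> n * (sqrt \<eta> * c * (r * n) ^ q)"
    using ec rnn pos by (intro mult_left_mono mult_right_mono) simp_all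
  also have "\<dots> = n * sqrt \<eta> * ((r * n) ^ q * c)" by (simp add: algebra_simps)
  also have "\<dots> \<le> n * sqrt \<eta> * a" using rc alow pos \<eta> by (intro mult_left_mono) simp_all
  finally have "a * m \<le> a * (\<rho> + sqrt \<eta> * n)" using main by (simp add: algebra_simps)
  thus ?thesis using apos by simp
qed

lemma core:
  fixes \<zeta> \<eta> :: real and r k n j v :: nat
  assumes k: "k \<ge> 1" and r: "r \<ge> 1" and n: "n \<ge> 1" and \<zeta>: "\<zeta> > 0" and \<eta>: "\<eta> > 0"
    and \<eta>le: "\<eta> \<le> ((\<zeta> / (real r * real k)) ^ (k - 1))\<^sup>2"
    and alloc: "is_allocation k r F"
    and cover: "\<forall>j\<in>{1..r}. \<exists>f\<in>#F. f -` {j} \<inter> {1..k} \<noteq> {}"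
    and part: "is_partition r n V Vp"
    and cx: "is_k_complex k V J"
    and d0: "delta_F Vp J F 0 \<ge> ereal (real n)"
    and ds: "\<forall>j\<in>{1..k-1}. delta_F Vp J F j \<ge> ereal (\<zeta> * real n)"
    and j: "j \<in> {1..r}" and v: "v \<in> Vp j"
  shows "ereal (real (card (reach_nbhd k r V Vp (layer J k) \<eta> 1 v \<inter> Vp j)))
                  \<ge> delta_F Vp J F (k - 1) - ereal (sqrt \<eta> * real n)"
proof -
  have cardVp: "\<And>i. i \<in> {1..r} \<Longrightarrow> card (Vp i) = n" using part unfolding is_partition_def by auto
  have finVp: "\<And>i. i \<in> {1..r} \<Longrightarrow> finite (Vp i)" using cardVp n
    by (metis card.infinite not_one_le_zero)
  have Vdef: "V = (\<Union>i\<in>{1..r}. Vp i)" using part unfolding is_partition_def by auto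
  have finV: "finite V" using Vdef finVp by auto
  have cardV: "card V \<le> r * n" using card_UN_le[of "{1..r}" Vp] cardVp Vdef by simp
  have JV: "\<And>e. e \<in> J \<Longrightarrow> e \<subseteq> V \<and> finite e \<and> card e \<le> k"
    and Jdown: "\<And>e e'. e \<in> J \<Longrightarrow> e' \<subseteq> e \<Longrightarrow> e' \<in> J" and J0: "{} \<in> J"
    using cx unfolding is_k_complex_def by auto
  obtain f0 i where f0: "f0 \<in># F" "i \<in> {1..k}" "f0 i = j" using cover j by blast
  define f1 where "f1 = f0 \<circ> Transposition.transpose 1 i"
  have f1F: "f1 \<in># F" unfolding f1_def
    by (rule orbit_closed[OF alloc f0(1)]) (rule permutes_swap_id, use k f0(2) in auto)
  have f1_1: "f1 1 = j" by (simp add: f1_def f0(3) Transposition.transpose_def)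
  define g where "g = f1 \<circ> Transposition.transpose 1 k"
  have gF: "g \<in># F" unfolding g_def
    by (rule orbit_closed[OF alloc f1F]) (rule permutes_swap_id, use k in auto)
  have "g k = f1 1" by (simp add: g_def)
  hence gk: "g k = j" using f1_1 by simp
  have vJ: "{v} \<in> J"
  proof -
    have "delta_f Vp J f1 0 \<le> ereal (card {u \<in> Vp (f1 (Suc 0)). u \<notin> {} \<and> insert u {} \<in> J})"
      by (rule df_le) (auto simp: f_shaped_def J0)
    hence "ereal n \<le> ereal (card {u \<in> Vp (f1 (Suc 0)). u \<notin> {} \<and> insert u {} \<in> J})"
      using dF_le[OF f1F, of Vp J 0] d0 by (meson order_trans)
    hence "ereal n \<le> ereal (card {u \<in> Vp j. {u} \<in> J})"
      using f1_1 by simp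
    hence le: "n \<le> card {u \<in> Vp j. {u} \<in> J}" by simp
    have "{u \<in> Vp j. {u} \<in> J} = Vp j"
      using card_subset_eq[OF finVp[OF j], of "{u \<in> Vp j. {u} \<in> J}"] le cardVp[OF j]
        card_mono[OF finVp[OF j], of "{u \<in> Vp j. {u} \<in> J}"] by auto
    thus ?thesis using v by auto
  qed
  define A where "A m = {T. card T = m \<and> v \<notin> T \<and> insert v T \<in> J \<and>
      (\<exists>w. T = w ` {2..m+1} \<and> (\<forall>i\<in>{2..m+1}. w i \<in> Vp (f1 i)))}" for m
  have A_sub: "A m \<subseteq> Pow V" for m using JV unfolding A_def by blast
  have finA: "finite (A m)" for m using A_sub finV by (meson finite_Pow_iff finite_subset)
  have finmem: "finite T" if "T \<in> A m" for T m
    using that A_sub finV by (meson PowD finite_subset subsetD)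
  have A0: "A 0 = {{}}"
    unfolding A_def using vJ v by auto
  have step: "real (card (A m)) * (\<zeta> * n) \<le> real k * real (card (A (m+1)))" if m: "m+1 \<le> k-1" for m
  proof -
    define ext where "ext T = {u \<in> Vp (f1 (m+2)). u \<notin> insert v T \<and> insert u (insert v T) \<in> J}" for T
    have ext_big: "\<zeta> * n \<le> card (ext T)" if T: "T \<in> A m" for T
    proof -
      from T obtain w where w: "T = w ` {2..m+1}" "\<forall>i\<in>{2..m+1}. w i \<in> Vp (f1 i)"
        and cT: "card T = m" "v \<notin> T" "insert v T \<in> J" by (auto simp: A_def)
      have finT: "finite T" using w by simp
      have img: "(w(1 := v)) ` {1..m+1} = insert v (w ` {2..m+1})"
      proof -
        have "{1..m+1} = insert 1 {2..m+1}" by auto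
        thus ?thesis by auto
      qed
      have sh: "f_shaped Vp f1 (m+1) (insert v T)"
        unfolding f_shaped_def
        by (rule exI[of _ "w(1 := v)"]) (use img w f1_1 v in auto)
      have cv: "card (insert v T) = m+1" using finT cT by simp
      have "delta_f Vp J f1 (m+1) \<le> ereal (card (ext T))"
        using df_le[OF cT(3) cv sh] unfolding ext_def by simp
      moreover have "ereal (\<zeta> * n) \<le> delta_F Vp J F (m+1)" using ds m by auto
      ultimately have "ereal (\<zeta> * n) \<le> ereal (card (ext T))"
        using dF_le[OF f1F, of Vp J "m+1"] by (meson order_trans)
      thus ?thesis by simp
    qed
    have ext_A: "insert u T \<in> A (m+1)" if T: "T \<in> A m" and u: "u \<in> ext T" for T u
    proof -
      from T obtain w where w: "T = w ` {2..m+1}" "\<forall>i\<in>{2..m+1}. w i \<in> Vp (f1 i)"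
        and cT: "card T = m" "v \<notin> T" "insert v T \<in> J" by (auto simp: A_def)
      have finT: "finite T" using w by simp
      have uT: "u \<notin> T" "u \<noteq> v" "u \<in> Vp (f1 (m+2))" "insert u (insert v T) \<in> J"
        using u unfolding ext_def by auto
      have "{2..m+2} = insert (m+2) {2..m+1}" by auto
      hence img: "(w(m+2 := u)) ` {2..(m+1)+1} = insert u T" using w(1) by auto
      have sh: "\<forall>i\<in>{2..(m+1)+1}. (w(m+2 := u)) i \<in> Vp (f1 i)" using w(2) uT(3) by auto
      have c1: "card (insert u T) = m+1" using finT cT uT by simp
      have c2: "insert v (insert u T) \<in> J" using uT(4) by (simp add: insert_commute)
      have "\<exists>w'. insert u T = w' ` {2..(m+1)+1} \<and> (\<forall>i\<in>{2..(m+1)+1}. w' i \<in> Vp (f1 i))"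
        using img sh by metis
      thus ?thesis unfolding A_def using c1 c2 uT cT by blast
    qed
    have finext: "finite (ext T)" for T
    proof -
      have "ext T \<subseteq> V" unfolding ext_def using JV by blast
      thus ?thesis using finV finite_subset by blast
    qed
    define P where "P = Sigma (A m) ext"
    have cP: "card P = (\<Sum>T\<in>A m. card (ext T))" unfolding P_def
      using card_SigmaI finA finext by blast
    have "(\<Sum>T\<in>A m. \<zeta> * n) \<le> (\<Sum>T\<in>A m. real (card (ext T)))"
      by (rule sum_mono) (rule ext_big)
    hence low: "real (card (A m)) * (\<zeta> * n) \<le> real (card P)" using cP by simp
    have inj: "inj_on (\<lambda>(T,u). (insert u T, u)) P"
    proof (rule inj_onI)
      fix x y assume a: "x \<in> P" "y \<in> P" "(\<lambda>(T,u). (insert u T, u)) x = (\<lambda>(T,u). (insert u T, u)) y"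
      obtain T u where x: "x = (T,u)" by fastforce
      obtain T' u' where y: "y = (T',u')" by fastforce
      from a(3) x y have e: "u = u'" "insert u T = insert u T'" by auto
      have "u \<notin> T" "u \<notin> T'" using a(1,2) x y e(1) unfolding P_def ext_def by auto
      hence "T = T'" using e(2) by (metis Diff_insert_absorb)
      thus "x = y" using x y e(1) by simp
    qed
    have sub: "(\<lambda>(T,u). (insert u T, u)) ` P \<subseteq> Sigma (A (m+1)) (\<lambda>T'. T')"
      unfolding P_def using ext_A by auto
    have finS: "finite (Sigma (A (m+1)) (\<lambda>T'. T'))"
      using finA finmem by (simp add: finite_SigmaI)
    have "card P \<le> card (Sigma (A (m+1)) (\<lambda>T'. T'))"
      using card_inj_on_le[OF inj sub finS] .
    also have "\<dots> = (\<Sum>T'\<in>A (m+1). card T')"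
      by (rule card_SigmaI) (use finA finmem in auto)
    also have "\<dots> = (\<Sum>T'\<in>A (m+1). m+1)" by (rule sum.cong) (auto simp: A_def)
    also have "\<dots> \<le> k * card (A (m+1))" using mult_le_mono1[of "m+1" k "card (A (m+1))"] m by (simp add: mult.commute)
    finally have "card P \<le> k * card (A (m+1))" .
    hence "real (card P) \<le> real k * real (card (A (m+1)))" by (simp only: of_nat_mult[symmetric] of_nat_le_iff)
    with low show ?thesis by linarith
  qed
  have Abound: "(\<zeta> * n / k) ^ m \<le> real (card (A m))" if "m \<le> k - 1" for m
    using that
  proof (induction m)
    case 0
    then show ?case using A0 by simp
  next
    case (Suc m)
    have IH: "(\<zeta> * n / k) ^ m \<le> real (card (A m))" using Suc by simp
    have st: "real (card (A m)) * (\<zeta> * n) \<le> real k * real (card (A (m+1)))"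
      using step[of m] Suc.prems by simp
    have kp: "real k > 0" using k by simp
    have zn: "\<zeta> * n / k \<ge> 0" using \<zeta> by simp
    have "(\<zeta> * n / k) ^ Suc m = (\<zeta> * n / k) ^ m * (\<zeta> * n / k)" by simp
    also have "\<dots> \<le> real (card (A m)) * (\<zeta> * n / k)"
      by (rule mult_right_mono[OF IH zn])
    also have "\<dots> = real (card (A m)) * (\<zeta> * n) / k" by simp
    also have "\<dots> \<le> real (card (A (Suc m)))"
      using st kp by (simp add: divide_le_eq mult.commute)
    finally show ?case .
  qed
  define AA where "AA = A (k-1)"
  define a where "a = real (card AA)"
  have alow: "(\<zeta> * n / k) ^ (k-1) \<le> a" unfolding a_def AA_def by (rule Abound) simp
  have apos: "a > 0"
    using alow \<zeta> n k by (smt (verit) divide_pos_pos of_nat_0_less_iff zero_less_power less_le_trans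
         mult_pos_pos le_numeral_extra(2) linorder_not_le)
  hence AAne: "AA \<noteq> {}" unfolding a_def by auto
  have finAA: "finite AA" unfolding AA_def by (rule finA)
  define ext2 where "ext2 S = {u \<in> Vp j. u \<notin> S \<and> insert u S \<in> J}" for S
  have AA_props: "delta_F Vp J F (k-1) \<le> ereal (card (ext2 S))" if S: "S \<in> AA" for S
  proof -
    from S obtain w where w: "S = w ` {2..(k-1)+1}" "\<forall>i\<in>{2..(k-1)+1}. w i \<in> Vp (f1 i)"
      and cS: "card S = k-1" "v \<notin> S" "insert v S \<in> J" by (auto simp: A_def AA_def)
    have SJ: "S \<in> J" using Jdown[OF cS(3)] by blast
    have kk: "(k-1)+1 = k" using k by simp
    have timg: "Transposition.transpose 1 k ` {1..k-1} = {2..k}"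
    proof (cases "k = 1")
      case True thus ?thesis by simp
    next
      case False
      hence k2: "k \<ge> 2" using k by simp
      show ?thesis
      proof
        show "Transposition.transpose 1 k ` {1..k-1} \<subseteq> {2..k}"
          using k2 by (auto simp: Transposition.transpose_def)
        show "{2..k} \<subseteq> Transposition.transpose 1 k ` {1..k-1}"
        proof
          fix x assume x: "x \<in> {2..k}"
          show "x \<in> Transposition.transpose 1 k ` {1..k-1}"
          proof (cases "x = k")
            case True
            thus ?thesis using k2 by (intro image_eqI[of _ _ 1]) (auto simp: Transposition.transpose_def)
          next
            case False
            thus ?thesis using x by (intro image_eqI[of _ _ x]) (auto simp: Transposition.transpose_def)
          qed
        qed
      qed
    qed
    have sh: "f_shaped Vp g (k-1) S"
      unfolding f_shaped_def
    proof (rule exI[of _ "w \<circ> Transposition.transpose 1 k"], intro conjI ballI)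
      show "S = (w \<circ> Transposition.transpose 1 k) ` {1..k-1}"
      proof -
        have "(w \<circ> Transposition.transpose 1 k) ` {1..k-1} = w ` (Transposition.transpose 1 k ` {1..k-1})"
          by (rule image_comp[symmetric])
        thus ?thesis using w(1) timg kk by simp
      qed
      fix i assume i: "i \<in> {1..k-1}"
      have "Transposition.transpose 1 k i \<in> {2..k}" using timg i by blast
      hence "w (Transposition.transpose 1 k i) \<in> Vp (f1 (Transposition.transpose 1 k i))"
        using w(2) kk by auto
      thus "(w \<circ> Transposition.transpose 1 k) i \<in> Vp (g i)" by (simp add: g_def)
    qed
    have "delta_f Vp J g (k-1) \<le> ereal (card {u \<in> Vp (g (Suc (k-1))). u \<notin> S \<and> insert u S \<in> J})"
      by (rule df_le[OF SJ cS(1) sh])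
    also have "Suc (k-1) = k" using k by simp
    finally have "delta_f Vp J g (k-1) \<le> ereal (card (ext2 S))" unfolding ext2_def using gk by simp
    thus ?thesis using dF_le[OF gF, of Vp J "k-1"] by (meson order_trans)
  qed
  define m0 where "m0 = Min ((\<lambda>S. card (ext2 S)) ` AA)"
  have "m0 \<in> (\<lambda>S. card (ext2 S)) ` AA" unfolding m0_def using finAA AAne by (intro Min_in) auto
  then obtain S0 where S0: "S0 \<in> AA" "card (ext2 S0) = m0" by auto
  have m0le: "m0 \<le> card (ext2 S)" if "S \<in> AA" for S unfolding m0_def using finAA that by simp
  have dle: "delta_F Vp J F (k-1) \<le> ereal m0" using AA_props[OF S0(1)] S0(2) by simp
  define R where "R = reach_nbhd k r V Vp (layer J k) \<eta> 1 v \<inter> Vp j"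
  have RW: "R \<subseteq> Vp j" unfolding R_def by auto
  define C where "C w = {S \<in> AA. w \<notin> S \<and> insert w S \<in> J}" for w
  have finext2: "finite (ext2 S)" for S using finVp[OF j] unfolding ext2_def by simp
  have finC: "finite (C w)" for w using finAA unfolding C_def by simp
  have c1: "card (Sigma AA ext2) = (\<Sum>S\<in>AA. card (ext2 S))" using card_SigmaI finAA finext2 by blast
  have c2: "card (Sigma (Vp j) C) = (\<Sum>w\<in>Vp j. card (C w))" using card_SigmaI finVp[OF j] finC by blast
  have swap: "(\<lambda>(S,w). (w,S)) ` Sigma AA ext2 = Sigma (Vp j) C"
    unfolding ext2_def C_def by (auto simp: image_iff)
  have injs: "inj_on (\<lambda>(S,w). (w,S)) (Sigma AA ext2)" by (auto simp: inj_on_def)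
  have sums: "(\<Sum>S\<in>AA. card (ext2 S)) = (\<Sum>w\<in>Vp j. card (C w))"
    using card_image[OF injs] swap c1 c2 by simp
  have lower: "a * real m0 \<le> (\<Sum>S\<in>AA. real (card (ext2 S)))"
  proof -
    have "(\<Sum>S\<in>AA. real m0) \<le> (\<Sum>S\<in>AA. real (card (ext2 S)))"
      by (rule sum_mono) (simp add: m0le)
    thus ?thesis unfolding a_def by simp
  qed
  define B where "B = \<eta> * (real r * real n) ^ (k-1)"
  have Bnn: "B \<ge> 0" unfolding B_def using \<eta> by simp
  have hpm: "has_perfect_matching (induced H X) X" if "X \<in> H" for H X
    unfolding has_perfect_matching_def induced_def using that
    by (intro exI[of _ "{X}"]) (auto simp: pairwise_def)
  have Cbound: "real (card (C w)) \<le> B" if w: "w \<in> Vp j - R" for w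
  proof -
    define RS where "RS = {S. S \<subseteq> V \<and> card S = 1 * k - 1 \<and>
                 has_perfect_matching (induced (layer J k) (insert v S)) (insert v S) \<and>
                 has_perfect_matching (induced (layer J k) (insert w S)) (insert w S)}"
    have "\<not> reachable k V (layer J k) \<eta> 1 v w"
      using w v j unfolding R_def reach_nbhd_def by auto
    hence lt: "real (card RS) < \<eta> * real (card V) ^ (1 * k - 1)"
      unfolding reachable_def RS_def by simp
    have sub: "C w \<subseteq> RS"
    proof
      fix S assume S: "S \<in> C w"
      hence SA: "S \<in> A (k-1)" "w \<notin> S" "insert w S \<in> J" unfolding C_def AA_def by auto
      hence cS: "card S = k-1" "v \<notin> S" "insert v S \<in> J" unfolding A_def by auto
      have fS: "finite S" using finmem SA(1) .
      have SV: "S \<subseteq> V" using JV[OF cS(3)] by auto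
      have l1: "insert v S \<in> layer J k" unfolding layer_def using cS fS k by simp
      have l2: "insert w S \<in> layer J k" unfolding layer_def using cS SA fS k by simp
      show "S \<in> RS" unfolding RS_def using SV cS hpm[OF l1] hpm[OF l2] by simp
    qed
    have finRS: "finite RS"
      by (rule finite_subset[of _ "Pow V"]) (use finV in \<open>auto simp: RS_def\<close>)
    have "real (card (C w)) \<le> real (card RS)" using card_mono[OF finRS sub] by simp
    also have "\<dots> \<le> \<eta> * real (card V) ^ (k - 1)" using lt by simp
    also have "\<dots> \<le> B" unfolding B_def
      using \<eta> cardV by (intro mult_left_mono power_mono) (simp_all add: of_nat_mult[symmetric] del: of_nat_mult)
    finally show ?thesis .
  qed
  define \<rho> where "\<rho> = real (card R)"
  have upper: "(\<Sum>w\<in>Vp j. real (card (C w))) \<le> \<rho> * a + real n * B"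
  proof -
    have "(\<Sum>w\<in>Vp j. real (card (C w))) = (\<Sum>w\<in>Vp j - R. real (card (C w))) + (\<Sum>w\<in>R. real (card (C w)))"
      using sum.subset_diff[OF RW finVp[OF j]] by simp
    also have "(\<Sum>w\<in>R. real (card (C w))) \<le> of_nat (card R) * a"
    proof (rule sum_bounded_above)
      fix w assume "w \<in> R"
      have "C w \<subseteq> AA" unfolding C_def by auto
      thus "real (card (C w)) \<le> a" unfolding a_def using card_mono[OF finAA] by simp
    qed
    also have "(\<Sum>w\<in>Vp j - R. real (card (C w))) \<le> of_nat (card (Vp j - R)) * B"
      by (rule sum_bounded_above) (rule Cbound)
    also have "of_nat (card (Vp j - R)) * B \<le> real n * B"
    proof -
      have "card (Vp j - R) \<le> n" using card_mono[OF finVp[OF j], of "Vp j - R"] cardVp[OF j] by auto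
      thus ?thesis using Bnn by (intro mult_right_mono) simp_all
    qed
    finally show ?thesis unfolding \<rho>_def by simp
  qed
  have main: "a * real m0 \<le> \<rho> * a + real n * B"
  proof -
    have "(\<Sum>S\<in>AA. real (card (ext2 S))) = (\<Sum>w\<in>Vp j. real (card (C w)))"
      using arg_cong[OF sums, of real] by simp
    thus ?thesis using lower upper by linarith
  qed
  have fin: "real m0 \<le> \<rho> + sqrt \<eta> * real n"
    by (rule arith_final[OF main[unfolded B_def] alow apos \<eta> \<eta>le \<zeta>]) (use r k n in simp_all)
  have "delta_F Vp J F (k - 1) - ereal (sqrt \<eta> * real n) \<le> ereal m0 - ereal (sqrt \<eta> * real n)"
    using dle by (cases "delta_F Vp J F (k - 1)") auto
  also have "\<dots> \<le> ereal \<rho>" using fin by simp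
  finally show ?thesis unfolding \<rho>_def R_def .
qed
theorem proposition4p1:
  "\<forall>\<zeta>::real. \<forall>r::nat. \<forall>k::nat. \<zeta> > 0 \<and> r \<ge> 1 \<and> k \<ge> 1 \<longrightarrow>
    (\<exists>\<eta>0::real. \<eta>0 > 0 \<and>
      (\<forall>\<eta>::real. 0 < \<eta> \<and> \<eta> \<le> \<eta>0 \<longrightarrow>
        (\<exists>n0::nat. \<forall>n::nat. n \<ge> n0 \<longrightarrow>
          (\<forall>(F :: (nat \<Rightarrow> nat) multiset) (V :: nat set) (Vp :: nat \<Rightarrow> nat set) (J :: nat set set).
             is_allocation k r F \<and>
             (\<forall>j\<in>{1..r}. \<exists>f\<in>#F. f -` {j} \<inter> {1..k} \<noteq> {}) \<and>
             is_partition r n V Vp \<and>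
             is_k_complex k V J \<and>
             is_PF_partite k Vp F J \<and>
             delta_F Vp J F 0 \<ge> ereal (real n) \<and>
             (\<forall>j\<in>{1..k-1}. delta_F Vp J F j \<ge> ereal (\<zeta> * real n))
           \<longrightarrow>
             (\<forall>j\<in>{1..r}. \<forall>v\<in>Vp j.
                ereal (real (card (reach_nbhd k r V Vp (layer J k) \<eta> 1 v \<inter> Vp j)))
                  \<ge> delta_F Vp J F (k - 1) - ereal (sqrt \<eta> * real n))))))"
proof (intro allI impI)
  fix \<zeta> :: real and r k :: nat
  assume h: "\<zeta> > 0 \<and> r \<ge> 1 \<and> k \<ge> 1"
  show "\<exists>\<eta>0::real. \<eta>0 > 0 \<and>
      (\<forall>\<eta>::real. 0 < \<eta> \<and> \<eta> \<le> \<eta>0 \<longrightarrow>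
        (\<exists>n0::nat. \<forall>n::nat. n \<ge> n0 \<longrightarrow>
          (\<forall>(F :: (nat \<Rightarrow> nat) multiset) (V :: nat set) (Vp :: nat \<Rightarrow> nat set) (J :: nat set set).
             is_allocation k r F \<and>
             (\<forall>j\<in>{1..r}. \<exists>f\<in>#F. f -` {j} \<inter> {1..k} \<noteq> {}) \<and>
             is_partition r n V Vp \<and>
             is_k_complex k V J \<and>
             is_PF_partite k Vp F J \<and>
             delta_F Vp J F 0 \<ge> ereal (real n) \<and>
             (\<forall>j\<in>{1..k-1}. delta_F Vp J F j \<ge> ereal (\<zeta> * real n))
           \<longrightarrow>
             (\<forall>j\<in>{1..r}. \<forall>v\<in>Vp j.
                ereal (real (card (reach_nbhd k r V Vp (layer J k) \<eta> 1 v \<inter> Vp j)))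
                  \<ge> delta_F Vp J F (k - 1) - ereal (sqrt \<eta> * real n)))))"
  proof (rule exI[of _ "((\<zeta> / (real r * real k)) ^ (k - 1))\<^sup>2"], intro conjI allI impI)
    show "((\<zeta> / (real r * real k)) ^ (k - 1))\<^sup>2 > 0" using h by simp
    fix \<eta> :: real
    assume e: "0 < \<eta> \<and> \<eta> \<le> ((\<zeta> / (real r * real k)) ^ (k - 1))\<^sup>2"
    show "\<exists>n0::nat. \<forall>n::nat. n \<ge> n0 \<longrightarrow>
          (\<forall>(F :: (nat \<Rightarrow> nat) multiset) (V :: nat set) (Vp :: nat \<Rightarrow> nat set) (J :: nat set set).
             is_allocation k r F \<and>
             (\<forall>j\<in>{1..r}. \<exists>f\<in>#F. f -` {j} \<inter> {1..k} \<noteq> {}) \<and>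
             is_partition r n V Vp \<and>
             is_k_complex k V J \<and>
             is_PF_partite k Vp F J \<and>
             delta_F Vp J F 0 \<ge> ereal (real n) \<and>
             (\<forall>j\<in>{1..k-1}. delta_F Vp J F j \<ge> ereal (\<zeta> * real n))
           \<longrightarrow>
             (\<forall>j\<in>{1..r}. \<forall>v\<in>Vp j.
                ereal (real (card (reach_nbhd k r V Vp (layer J k) \<eta> 1 v \<inter> Vp j)))
                  \<ge> delta_F Vp J F (k - 1) - ereal (sqrt \<eta> * real n)))"
    proof (rule exI[of _ 1], intro allI impI ballI)
      fix n :: nat and F V Vp J j v
      assume n: "1 \<le> n"
        and H: "is_allocation k r F \<and>
             (\<forall>j\<in>{1..r}. \<exists>f\<in>#F. f -` {j} \<inter> {1..k} \<noteq> {}) \<and>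
             is_partition r n V Vp \<and>
             is_k_complex k V J \<and>
             is_PF_partite k Vp F J \<and>
             delta_F Vp J F 0 \<ge> ereal (real n) \<and>
             (\<forall>j\<in>{1..k-1}. delta_F Vp J F j \<ge> ereal (\<zeta> * real n))"
        and j: "j \<in> {1..r}" and v: "v \<in> Vp j"
      show "ereal (real (card (reach_nbhd k r V Vp (layer J k) \<eta> 1 v \<inter> Vp j)))
                  \<ge> delta_F Vp J F (k - 1) - ereal (sqrt \<eta> * real n)"
        using core[of k r n \<zeta> \<eta> F V Vp J j v] h e n H j v by blast
    qed
  qed
qed

end
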